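(* Let $q$ be a prime power, $M\geq2$ an integer with $(M,q)=1$, and $m\geq1$. Let $X\in\mathrm{Sp}(2m,q)$ be conjugate in $\mathrm{GL}(2m,q)$ to the $2m\times 2m$ matrix with $-1$ on the diagonal, $1$ on the superdiagonal and $0$ elsewhere (a single Jordan block with eigenvalue $-1$). Then $X$ is an $M$-th power in $\mathrm{Sp}(2m,q)$ if and only if $M$ is odd.
   Context: $\mathrm{Sp}(2m,q)$ is the symplectic group of a non-degenerate alternating form on $\mathbb{F}_q^{2m}$. An element $X$ of a group $G$ is an $M$-th power in $G$ if $Y^M=X$ for some $Y\in G$. *)

theory Defs
  imports "Jordan_Normal_Form.Jordan_Normal_Form"
begin

definition nondeg_alternating_form :: "nat \<Rightarrow> 'a :: field mat \<Rightarrow> bool" where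
  "nondeg_alternating_form n J \<longleftrightarrow>
     J \<in> carrier_mat n n \<and> invertible_mat J \<and>
     (\<forall>v \<in> carrier_vec n. v \<bullet> (J *\<^sub>v v) = 0)"

definition symplectic_group :: "nat \<Rightarrow> 'a :: field mat \<Rightarrow> 'a mat set" where
  "symplectic_group n J = {A \<in> carrier_mat n n. transpose_mat A * J * A = J}"

definition is_Mth_power_in :: "'a :: semiring_1 mat set \<Rightarrow> nat \<Rightarrow> 'a mat \<Rightarrow> bool" where
  "is_Mth_power_in G M X \<longleftrightarrow> (\<exists>Y \<in> G. Y ^\<^sub>m M = X)"

end

theory Submission
  imports Defs "HOL-Number_Theory.Number_Theory" "HOL-Computational_Algebra.Computational_Algebra"
begin

lemma pow_mat_add: "A \<in> carrier_mat n n \<Longrightarrow> A ^\<^sub>m (k + l) = A ^\<^sub>m k * A ^\<^sub>m l"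
proof (induction l)
  case 0 then show ?case by simp
next
  case (Suc l)
  have "A ^\<^sub>m (k + Suc l) = (A ^\<^sub>m k * A ^\<^sub>m l) * A" using Suc by simp
  also have "\<dots> = A ^\<^sub>m k * (A ^\<^sub>m l * A)" using Suc.prems by (meson assoc_mult_mat pow_carrier_mat)
  finally show ?case by simp
qed

lemma pow_mat_mult: "A \<in> carrier_mat n n \<Longrightarrow> A ^\<^sub>m (k * l) = (A ^\<^sub>m k) ^\<^sub>m l"
proof (induction l)
  case 0 then show ?case by simp
next
  case (Suc l)
  have "A ^\<^sub>m (k * Suc l) = A ^\<^sub>m (k * l + k)" by (simp add: add.commute)
  also have "\<dots> = A ^\<^sub>m (k * l) * A ^\<^sub>m k" by (rule pow_mat_add[OF Suc.prems])
  finally show ?case using Suc by simp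
qed

lemma pow_mat_commute: assumes A: "A \<in> carrier_mat n n" and B: "B \<in> carrier_mat n n" and c: "A * B = B * A"
  shows "A ^\<^sub>m k * B = B * A ^\<^sub>m k"
proof (induction k)
  case 0 then show ?case using assms by simp
next
  case (Suc k)
  have Ak: "A ^\<^sub>m k \<in> carrier_mat n n" using A by simp
  have "A ^\<^sub>m Suc k * B = A ^\<^sub>m k * A * B" by simp
  also have "\<dots> = A ^\<^sub>m k * (A * B)" using assoc_mult_mat[OF Ak A B] .
  also have "\<dots> = A ^\<^sub>m k * (B * A)" using c by simp
  also have "\<dots> = (A ^\<^sub>m k * B) * A" using assoc_mult_mat[OF Ak B A] by simp
  also have "\<dots> = (B * A ^\<^sub>m k) * A" using Suc by simp
  also have "\<dots> = B * (A ^\<^sub>m k * A)" using assoc_mult_mat[OF B Ak A] .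
  finally show ?case by simp
qed

lemma pow_mat_mult_distrib: assumes A: "A \<in> carrier_mat n n" and B: "B \<in> carrier_mat n n" and c: "A * B = B * A"
  shows "(A * B) ^\<^sub>m k = A ^\<^sub>m k * B ^\<^sub>m k"
proof (induction k)
  case 0 then show ?case using assms by simp
next
  case (Suc k)
  have Ak: "A ^\<^sub>m k \<in> carrier_mat n n" using A by simp
  have Bk: "B ^\<^sub>m k \<in> carrier_mat n n" using B by simp
  have c2: "B ^\<^sub>m k * A = A * B ^\<^sub>m k" using pow_mat_commute[OF B A c[symmetric]] .
  have "(A * B) ^\<^sub>m Suc k = (A ^\<^sub>m k * B ^\<^sub>m k) * (A * B)" using Suc by simp
  also have "\<dots> = A ^\<^sub>m k * (B ^\<^sub>m k * (A * B))" using assoc_mult_mat[OF Ak Bk mult_carrier_mat[OF A B]] .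
  also have "B ^\<^sub>m k * (A * B) = (B ^\<^sub>m k * A) * B" using assoc_mult_mat[OF Bk A B] by simp
  also have "\<dots> = A * (B ^\<^sub>m k * B)" using c2 assoc_mult_mat[OF A Bk B] by simp
  also have "A ^\<^sub>m k * (A * (B ^\<^sub>m k * B)) = (A ^\<^sub>m k * A) * (B ^\<^sub>m k * B)"
    using assoc_mult_mat[OF Ak A mult_carrier_mat[OF Bk B]] by simp
  finally show ?case by simp
qed

lemma transpose_pow: fixes A :: "'a :: comm_ring_1 mat" assumes A: "A \<in> carrier_mat n n" shows "transpose_mat (A ^\<^sub>m k) = (transpose_mat A) ^\<^sub>m k"
proof (induction k)
  case 0 then show ?case using assms by simp
next
  case (Suc k)
  have "transpose_mat (A ^\<^sub>m Suc k) = transpose_mat A * transpose_mat (A ^\<^sub>m k)"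
    using transpose_mult[OF pow_carrier_mat[OF A, of k] A] by simp
  also have "\<dots> = transpose_mat A * (transpose_mat A) ^\<^sub>m k" using Suc by simp
  also have "\<dots> = (transpose_mat A) ^\<^sub>m Suc k"
    using pow_mat_commute[of "transpose_mat A" n "transpose_mat A" k] assms by simp
  finally show ?case .
qed

lemma sympl_mult: assumes "A \<in> symplectic_group n J" "B \<in> symplectic_group n J" "J \<in> carrier_mat n n"
  shows "A * B \<in> symplectic_group n J"
proof -
  have A: "A \<in> carrier_mat n n" "transpose_mat A * J * A = J" and B: "B \<in> carrier_mat n n" "transpose_mat B * J * B = J"
    using assms unfolding symplectic_group_def by auto
  note Jc = assms(3)
  have At: "transpose_mat A \<in> carrier_mat n n" "transpose_mat B \<in> carrier_mat n n" using A B by auto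
  have "transpose_mat (A * B) * J * (A * B) = transpose_mat B * transpose_mat A * J * (A * B)"
    using transpose_mult[OF A(1) B(1)] by simp
  also have "\<dots> = transpose_mat B * (transpose_mat A * J * A) * B"
    using A(1) B(1) Jc At by (simp add: assoc_mult_mat[of _ n n _ n _ n])
  also have "\<dots> = J" using A B by simp
  finally show ?thesis using A B unfolding symplectic_group_def by auto
qed

lemma sympl_one: "J \<in> carrier_mat n n \<Longrightarrow> 1\<^sub>m n \<in> symplectic_group n J"
  unfolding symplectic_group_def by auto

lemma sympl_pow: assumes "A \<in> symplectic_group n J" "J \<in> carrier_mat n n"
  shows "A ^\<^sub>m k \<in> symplectic_group n J"
proof (induction k)
  case 0
  have "dim_row A = n" using assms unfolding symplectic_group_def by auto
  then show ?case using assms sympl_one[of J n] by simp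
next
  case (Suc k) then show ?case using sympl_mult assms by simp
qed


lemma alt_skew_entry: fixes J :: "'a::comm_ring_1 mat"
  assumes J: "J \<in> carrier_mat n n" and alt: "\<forall>v\<in>carrier_vec n. v \<bullet> (J *\<^sub>v v) = 0"
    and i: "i < n" and j: "j < n"
  shows "J $$ (i,j) = - J $$ (j,i)"
proof -
  have e: "unit_vec n a \<bullet> (J *\<^sub>v unit_vec n b) = J $$ (a,b)" if "a < n" "b < n" for a b
  proof -
    have "J *\<^sub>v unit_vec n b \<in> carrier_vec n" using J by simp
    then have "unit_vec n a \<bullet> (J *\<^sub>v unit_vec n b) = (J *\<^sub>v unit_vec n b) $ a"
      using that(1) by (rule scalar_prod_left_unit)
    also have "\<dots> = row J a \<bullet> unit_vec n b" using J that by simp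
    also have "\<dots> = row J a $ b" using J that by (intro scalar_prod_right_unit) auto
    also have "\<dots> = J $$ (a,b)" using J that by simp
    finally show ?thesis .
  qed
  define ei where "ei = (unit_vec n i :: 'a vec)"
  define ej where "ej = (unit_vec n j :: 'a vec)"
  have c: "ei \<in> carrier_vec n" "ej \<in> carrier_vec n" "J *\<^sub>v ei \<in> carrier_vec n" "J *\<^sub>v ej \<in> carrier_vec n"
    using J unfolding ei_def ej_def by auto
  let ?u = "ei + ej"
  have uc: "?u \<in> carrier_vec n" using c by simp
  have "J *\<^sub>v ?u = J *\<^sub>v ei + J *\<^sub>v ej" by (rule mult_add_distrib_mat_vec[OF J c(1,2)])
  then have "?u \<bullet> (J *\<^sub>v ?u) = ?u \<bullet> (J *\<^sub>v ei + J *\<^sub>v ej)" by simp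
  also have "\<dots> = ei \<bullet> (J *\<^sub>v ei + J *\<^sub>v ej) + ej \<bullet> (J *\<^sub>v ei + J *\<^sub>v ej)"
    by (rule add_scalar_prod_distrib[of _ n]) (use c in auto)
  also have "ei \<bullet> (J *\<^sub>v ei + J *\<^sub>v ej) = ei \<bullet> (J *\<^sub>v ei) + ei \<bullet> (J *\<^sub>v ej)"
    by (rule scalar_prod_add_distrib[of _ n]) (use c in auto)
  also have "ej \<bullet> (J *\<^sub>v ei + J *\<^sub>v ej) = ej \<bullet> (J *\<^sub>v ei) + ej \<bullet> (J *\<^sub>v ej)"
    by (rule scalar_prod_add_distrib[of _ n]) (use c in auto)
  finally have s: "?u \<bullet> (J *\<^sub>v ?u) = (J $$ (i,i) + J $$ (i,j)) + (J $$ (j,i) + J $$ (j,j))"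
    using e i j unfolding ei_def ej_def by simp
  have "J $$ (i,i) = 0" using alt c(1) e[OF i i] unfolding ei_def by auto
  moreover have "J $$ (j,j) = 0" using alt c(2) e[OF j j] unfolding ej_def by auto
  moreover have "?u \<bullet> (J *\<^sub>v ?u) = 0" using alt uc by blast
  ultimately show ?thesis using s by (simp add: eq_neg_iff_add_eq_0)
qed

lemma alt_skew: fixes J :: "'a::comm_ring_1 mat"
  assumes J: "J \<in> carrier_mat n n" and alt: "\<forall>v\<in>carrier_vec n. v \<bullet> (J *\<^sub>v v) = 0"
  shows "transpose_mat J = - J"
proof (rule eq_matI)
  fix i j assume "i < dim_row (- J)" "j < dim_col (- J)"
  then have ij: "i < n" "j < n" using J by auto
  then show "transpose_mat J $$ (i,j) = (- J) $$ (i,j)"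
    using J alt_skew_entry[OF J alt ij(2) ij(1)] by simp
qed (use J in auto)

lemma char_choose_zero:
  assumes p: "prime CHAR('a::comm_ring_1)" and k: "0 < k" "k < CHAR('a) ^ s"
  shows "(of_nat (CHAR('a) ^ s choose k) :: 'a) = 0"
proof -
  have pp: "prime CHAR('a poly)" using p by simp
  have "([:0, 1:] + 1 :: 'a poly) ^ (CHAR('a) ^ s) = [:0, 1:] ^ (CHAR('a) ^ s) + 1 ^ (CHAR('a) ^ s)"
    by (rule freshmans_dream'[OF pp]) simp
  moreover have "([:0, 1:] + 1 :: 'a poly) = [:1, 1:]" by (simp add: one_pCons)
  ultimately have eq: "[:1, 1:] ^ (CHAR('a) ^ s) = ([:0, 1:] ^ (CHAR('a) ^ s) + 1 :: 'a poly)" by simp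
  have "Polynomial.coeff ([:1, 1:] ^ (CHAR('a) ^ s)) k = (of_nat (CHAR('a) ^ s choose k) :: 'a)"
    using coeff_linear_poly_power[of k "CHAR('a) ^ s" "1::'a" 1] k by simp
  moreover have "Polynomial.coeff ([:0, 1:] ^ (CHAR('a) ^ s) + 1 :: 'a poly) k = 0"
    using k by (simp add: coeff_monom flip: monom_altdef[of "1::'a" "CHAR('a) ^ s", simplified])
  ultimately show ?thesis using eq by simp
qed

lemma jordan_block_pow_char:
  fixes c :: "'a :: comm_ring_1"
  assumes p: "prime CHAR('a)" and n: "n \<le> CHAR('a) ^ s"
  shows "jordan_block n c ^\<^sub>m (CHAR('a) ^ s) = mat n n (\<lambda>(i,j). if i = j then c ^ (CHAR('a) ^ s) else 0)"
  unfolding jordan_block_pow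
proof (rule eq_matI)
  fix i j assume ij: "i < dim_row (mat n n (\<lambda>(i,j). if i = j then c ^ (CHAR('a) ^ s) else 0))"
    "j < dim_col (mat n n (\<lambda>(i,j). if i = j then c ^ (CHAR('a) ^ s) else 0))"
  then show "mat n n (\<lambda>(i, j). if i \<le> j then of_nat (CHAR('a) ^ s choose (j - i)) * c ^ (CHAR('a) ^ s + i - j) else 0) $$ (i, j) =
         mat n n (\<lambda>(i,j). if i = j then c ^ (CHAR('a) ^ s) else 0) $$ (i, j)"
    using char_choose_zero[OF p, of "j-i" s] n by auto
qed auto


lemma one_pow_mat: "(1\<^sub>m n :: 'a::semiring_1 mat) ^\<^sub>m k = 1\<^sub>m n"
  by (induction k) auto

lemma pow_mat_two: "A \<in> carrier_mat n n \<Longrightarrow> A ^\<^sub>m 2 = A * A"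
  by (simp add: numeral_2_eq_2)

lemma order_X:
  fixes X P Q :: "'a::comm_ring_1 mat"
  assumes p: "prime CHAR('a)" and ns: "n \<le> CHAR('a) ^ s" and X: "X \<in> carrier_mat n n"
    and wit: "similar_mat_wit X (jordan_block n (-1)) P Q"
  shows "X ^\<^sub>m (CHAR('a) ^ s * 2) = 1\<^sub>m n"
proof -
  let ?N = "CHAR('a) ^ s"
  define e where "e = (-1::'a) ^ ?N"
  have ee: "e * e = 1" unfolding e_def by (simp flip: power_mult_distrib)
  have D: "jordan_block n (-1) ^\<^sub>m ?N = e \<cdot>\<^sub>m 1\<^sub>m n"
    unfolding jordan_block_pow_char[OF p ns] by (rule eq_matI) (auto simp: e_def)
  have Dc: "e \<cdot>\<^sub>m 1\<^sub>m n \<in> carrier_mat n n" by simp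
  have "jordan_block n (-1) ^\<^sub>m (?N * 2) = (e \<cdot>\<^sub>m 1\<^sub>m n) ^\<^sub>m 2"
    unfolding D[symmetric] by (rule pow_mat_mult[OF jordan_block_carrier])
  also have "\<dots> = (e \<cdot>\<^sub>m 1\<^sub>m n) * (e \<cdot>\<^sub>m 1\<^sub>m n)" by (rule pow_mat_two[OF Dc])
  also have "\<dots> = e \<cdot>\<^sub>m (1\<^sub>m n * (e \<cdot>\<^sub>m 1\<^sub>m n))" by (rule mult_smult_assoc_mat) auto
  also have "\<dots> = 1\<^sub>m n" by (rule eq_matI) (auto simp: ee mult.assoc[symmetric])
  finally have J2: "jordan_block n (-1::'a) ^\<^sub>m (?N * 2) = 1\<^sub>m n" .
  have PQ: "P * Q = 1\<^sub>m n" "P \<in> carrier_mat n n" "Q \<in> carrier_mat n n"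
    using similar_mat_witD2[OF X wit] by auto
  have "X ^\<^sub>m (?N * 2) = P * jordan_block n (-1) ^\<^sub>m (?N * 2) * Q"
    by (rule similar_mat_wit_pow_id[OF wit])
  also have "\<dots> = 1\<^sub>m n" using J2 PQ by simp
  finally show ?thesis .
qed

lemma power_of_finite_order:
  fixes X J :: "'a::field mat"
  assumes X: "X \<in> symplectic_group n J" and J: "J \<in> carrier_mat n n"
    and r: "X ^\<^sub>m r = 1\<^sub>m n" "r > 1" and cop: "coprime M r"
  shows "is_Mth_power_in (symplectic_group n J) M X"
proof -
  have Xc: "X \<in> carrier_mat n n" using X unfolding symplectic_group_def by auto
  obtain x where x: "[M * x = Suc 0] (mod r)" using cong_solve_coprime_nat[OF cop] by blast
  then have "(M * x) mod r = 1" using r(2) by (simp add: cong_def)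
  then have Mx: "M * x = r * (M * x div r) + 1" by (metis div_mult_mod_eq add.commute mult.commute)
  have "(X ^\<^sub>m x) ^\<^sub>m M = X ^\<^sub>m (x * M)" using pow_mat_mult[OF Xc] by simp
  also have "\<dots> = X ^\<^sub>m (r * (M * x div r) + 1)" using Mx by (simp add: mult.commute)
  also have "\<dots> = X ^\<^sub>m (r * (M * x div r)) * X ^\<^sub>m 1" by (rule pow_mat_add[OF Xc])
  also have "\<dots> = X" using pow_mat_mult[OF Xc, of r] r(1) Xc by (simp add: one_pow_mat)
  finally show ?thesis unfolding is_Mth_power_in_def using sympl_pow[OF X J, of x] by blast
qed

lemma intertwine_pow:
  fixes U V J :: "'a::comm_ring_1 mat"
  assumes U: "U \<in> carrier_mat n n" and V: "V \<in> carrier_mat n n" and J: "J \<in> carrier_mat n n"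
    and UJ: "U * J = J * V"
  shows "U ^\<^sub>m k * J = J * V ^\<^sub>m k"
proof (induction k)
  case 0 then show ?case using J U V by simp
next
  case (Suc k)
  have Uk: "U ^\<^sub>m k \<in> carrier_mat n n" "V ^\<^sub>m k \<in> carrier_mat n n" using U V by auto
  have "U ^\<^sub>m Suc k * J = U ^\<^sub>m k * (U * J)" using assoc_mult_mat[OF Uk(1) U J] by simp
  also have "\<dots> = (U ^\<^sub>m k * J) * V" using UJ assoc_mult_mat[OF Uk(1) J V] by simp
  also have "\<dots> = J * (V ^\<^sub>m k * V)" using Suc assoc_mult_mat[OF J Uk(2) V] by simp
  finally show ?case by simp
qed

lemma E_entries:
  fixes A B :: "'a::comm_ring_1 mat"
  assumes A: "A \<in> carrier_mat n n" and B: "B \<in> carrier_mat n n" and i: "i < n" and j: "j < n"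
  shows "(A * mat n n (\<lambda>(i,j). if j \<ge> i \<and> j - i = n - 1 then 1 else 0) * B) $$ (i,j) = A $$ (i,0) * B $$ (n-1, j)"
proof -
  let ?E = "mat n n (\<lambda>(i,j). if j \<ge> i \<and> j - i = n - 1 then 1 else 0) :: 'a mat"
  have AE: "A * ?E = mat n n (\<lambda>(i,l). if l = n - 1 then A $$ (i,0) else 0)"
  proof (rule eq_matI)
    fix a l assume a: "a < dim_row (mat n n (\<lambda>(i,l). if l = n - 1 then A $$ (i,0) else 0))"
      and l: "l < dim_col (mat n n (\<lambda>(i,l). if l = n - 1 then A $$ (i,0) else 0))"
    then have a': "a < n" and l': "l < n" by auto
    have "(A * ?E) $$ (a,l) = (\<Sum>k\<in>{0..<n}. A $$ (a,k) * (if l \<ge> k \<and> l - k = n - 1 then 1 else 0))"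
      using A a' l' by (simp add: scalar_prod_def)
    also have "\<dots> = (\<Sum>k\<in>{0..<n}. if k = 0 then (if l = n - 1 then A $$ (a,0) else 0) else 0)"
      by (rule sum.cong) (use l' in auto)
    also have "\<dots> = (if l = n - 1 then A $$ (a,0) else 0)" using l' by simp
    finally show "(A * ?E) $$ (a,l) = mat n n (\<lambda>(i,l). if l = n - 1 then A $$ (i,0) else 0) $$ (a,l)"
      using a' l' by simp
  qed (use A in auto)
  have "(A * ?E * B) $$ (i,j) = (\<Sum>l\<in>{0..<n}. (if l = n - 1 then A $$ (i,0) else 0) * B $$ (l,j))"
    unfolding AE using B i j by (simp add: scalar_prod_def)
  also have "\<dots> = (\<Sum>l\<in>{0..<n}. if l = n - 1 then A $$ (i,0) * B $$ (l,j) else 0)"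
    by (rule sum.cong) auto
  also have "\<dots> = A $$ (i,0) * B $$ (n-1, j)" using i by simp
  finally show ?thesis .
qed

lemma rank1_skew_false:
  fixes A B Ai Bi :: "'a::field mat"
  assumes two: "(2::'a) \<noteq> 0" and n: "n \<ge> 1"
    and A: "A \<in> carrier_mat n n" and B: "B \<in> carrier_mat n n"
    and Ai: "Ai \<in> carrier_mat n n" and Bi: "Bi \<in> carrier_mat n n"
    and AiA: "Ai * A = 1\<^sub>m n" and BBi: "B * Bi = 1\<^sub>m n"
    and skew: "transpose_mat (A * mat n n (\<lambda>(i,j). if j \<ge> i \<and> j - i = n - 1 then 1 else 0) * B)
       = - (A * mat n n (\<lambda>(i,j). if j \<ge> i \<and> j - i = n - 1 then 1 else 0) * B)"
  shows False
proof -
  let ?G = "A * mat n n (\<lambda>(i,j). if j \<ge> i \<and> j - i = n - 1 then 1 else 0) * B"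
  have Gc: "?G \<in> carrier_mat n n" using A B by auto
  have sk: "A $$ (i,0) * B $$ (n-1,j) = - (A $$ (j,0) * B $$ (n-1,i))" if "i < n" "j < n" for i j
  proof -
    have "?G $$ (i,j) = transpose_mat ?G $$ (j,i)"
      by (rule index_transpose_mat(1)[symmetric]) (use that Gc in auto)
    also have "\<dots> = (- ?G) $$ (j,i)" by (simp only: skew)
    also have "\<dots> = - ?G $$ (j,i)" by (rule index_uminus_mat(1)) (use that Gc in auto)
    finally have "?G $$ (i,j) = - ?G $$ (j,i)" .
    then show ?thesis by (simp only: E_entries[OF A B that] E_entries[OF A B that(2) that(1)])
  qed
  have sq: "A $$ (i,0) * B $$ (n-1,i) = 0" if "i < n" for i
  proof -
    have "A $$ (i,0) * B $$ (n-1,i) + A $$ (i,0) * B $$ (n-1,i) = 0"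
      using sk[OF that that] eq_neg_iff_add_eq_0 by blast
    then have "2 * (A $$ (i,0) * B $$ (n-1,i)) = 0" by (simp only: mult_2)
    then show ?thesis using two by simp
  qed
  have n0: "0 < n" "n - 1 < n" using n by auto
  have "(Ai * A) $$ (0,0) = 1" using AiA n0 by simp
  then have "(\<Sum>k\<in>{0..<n}. Ai $$ (0,k) * A $$ (k,0)) = 1" using A Ai n0 by (simp add: scalar_prod_def)
  then have "\<exists>k<n. A $$ (k,0) \<noteq> 0"
  proof (rule contrapos_pp)
    assume "\<not> (\<exists>k<n. A $$ (k,0) \<noteq> 0)"
    then have "\<forall>k\<in>{0..<n}. Ai $$ (0,k) * A $$ (k,0) = 0" by auto
    then show "(\<Sum>k\<in>{0..<n}. Ai $$ (0,k) * A $$ (k,0)) \<noteq> 1" by (subst sum.neutral) auto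
  qed
  then obtain k where k: "k < n" "A $$ (k,0) \<noteq> 0" by blast
  have "(B * Bi) $$ (n-1,n-1) = 1" using BBi n0 by simp
  then have "(\<Sum>l\<in>{0..<n}. B $$ (n-1,l) * Bi $$ (l,n-1)) = 1" using B Bi n0 by (simp add: scalar_prod_def)
  then have "\<exists>l<n. B $$ (n-1,l) \<noteq> 0"
  proof (rule contrapos_pp)
    assume "\<not> (\<exists>l<n. B $$ (n-1,l) \<noteq> 0)"
    then have "\<forall>l\<in>{0..<n}. B $$ (n-1,l) * Bi $$ (l,n-1) = 0" by auto
    then show "(\<Sum>l\<in>{0..<n}. B $$ (n-1,l) * Bi $$ (l,n-1)) \<noteq> 1" by (subst sum.neutral) auto
  qed
  then obtain l where l: "l < n" "B $$ (n-1,l) \<noteq> 0" by blast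
  have "B $$ (n-1,k) = 0" using sq[OF k(1)] k by simp
  moreover have "A $$ (l,0) = 0" using sq[OF l(1)] l by simp
  ultimately have "A $$ (k,0) * B $$ (n-1,l) = 0" using sk[OF k(1) l(1)] by simp
  then show False using k l by simp
qed


lemma no_sqrt:
  fixes Z Zi X J Ji P Q :: "'a::field mat"
  assumes two: "(2::'a) \<noteq> 0" and n: "n \<ge> 1"
    and J: "J \<in> carrier_mat n n" and Ji: "Ji \<in> carrier_mat n n" and JiJ: "Ji * J = 1\<^sub>m n"
    and Jskew: "transpose_mat J = - J"
    and Z: "Z \<in> carrier_mat n n" and ZJ: "transpose_mat Z * J * Z = J"
    and ZX: "Z * Z = X"
    and Zi: "Zi \<in> carrier_mat n n" and ZZi: "Z * Zi = 1\<^sub>m n" and ZiZ: "Zi * Z = 1\<^sub>m n"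
    and wit: "similar_mat_wit X (jordan_block n (-1)) P Q"
  shows False
proof -
  have X: "X \<in> carrier_mat n n" using ZX Z by auto
  note PQ = similar_mat_witD2[OF X wit]
  have P: "P \<in> carrier_mat n n" and Q: "Q \<in> carrier_mat n n" using PQ by auto
  define S where "S = Z + Zi"
  have Sc: "S \<in> carrier_mat n n" using Z Zi by (simp add: S_def)
  have Zt: "transpose_mat Z \<in> carrier_mat n n" "transpose_mat Zi \<in> carrier_mat n n" using Z Zi by auto
  have ZtJ: "transpose_mat Z * J = J * Zi"
  proof -
    have "transpose_mat Z * J = transpose_mat Z * J * (Z * Zi)" using ZZi Zt J by simp
    also have "\<dots> = (transpose_mat Z * J * Z) * Zi"
      using Zt J Z Zi by (simp add: assoc_mult_mat[of _ n n _ n _ n])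
    also have "\<dots> = J * Zi" using ZJ by simp
    finally show ?thesis .
  qed
  have ZitJ: "transpose_mat Zi * J = J * Z"
  proof -
    have "transpose_mat Zi * J = transpose_mat Zi * (transpose_mat Z * J * Z)" using ZJ by simp
    also have "\<dots> = (transpose_mat Zi * transpose_mat Z) * J * Z"
      using Zt J Z by (simp add: assoc_mult_mat[of _ n n _ n _ n])
    also have "transpose_mat Zi * transpose_mat Z = transpose_mat (Z * Zi)"
      using transpose_mult[OF Z Zi] by simp
    also have "\<dots> = 1\<^sub>m n" using ZZi by simp
    finally show ?thesis using J Z by simp
  qed
  have StJ: "transpose_mat S * J = J * S"
  proof -
    have "transpose_mat S = transpose_mat Z + transpose_mat Zi" unfolding S_def by (rule transpose_add[OF Z Zi])
    then have "transpose_mat S * J = transpose_mat Z * J + transpose_mat Zi * J"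
      using add_mult_distrib_mat[OF Zt J] by simp
    also have "\<dots> = J * Zi + J * Z" using ZtJ ZitJ by simp
    also have "\<dots> = J * Z + J * Zi" using J Z Zi by (intro comm_add_mat[of _ n n]) auto
    also have "\<dots> = J * S" unfolding S_def using mult_add_distrib_mat[OF J Z Zi] by simp
    finally show ?thesis .
  qed
  define T where "T = S ^\<^sub>m (n-1)"
  have Tc: "T \<in> carrier_mat n n" using Sc by (simp add: T_def)
  have TtJ: "transpose_mat T * J = J * T"
    unfolding T_def transpose_pow[OF Sc] by (rule intertwine_pow[OF _ Sc J StJ]) (use Sc in simp)
  have Gskew: "transpose_mat (J * T) = - (J * T)"
  proof -
    have "transpose_mat (J * T) = transpose_mat T * transpose_mat J" by (rule transpose_mult[OF J Tc])
    also have "\<dots> = - (transpose_mat T * J)" unfolding Jskew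
      by (rule uminus_mult_right_mat) (use Tc J in simp)
    also have "\<dots> = - (J * T)" using TtJ by simp
    finally show ?thesis .
  qed
  have SZ: "S * Z = X + 1\<^sub>m n" by (simp only: S_def add_mult_distrib_mat[OF Z Zi Z] ZX ZiZ)
  have ZS: "Z * S = X + 1\<^sub>m n" by (simp only: S_def mult_add_distrib_mat[OF Z Z Zi] ZX ZZi)
  have SZc: "S * Z = Z * S" by (simp only: SZ ZS)
  have K: "(X + 1\<^sub>m n) ^\<^sub>m (n-1) = T * Z ^\<^sub>m (n-1)"
    unfolding T_def SZ[symmetric] by (rule pow_mat_mult_distrib[OF Sc Z SZc])
  have c1: "Z * Zi = Zi * Z" by (simp only: ZZi ZiZ)
  have ZkZik: "Z ^\<^sub>m (n-1) * Zi ^\<^sub>m (n-1) = 1\<^sub>m n"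
    using pow_mat_mult_distrib[OF Z Zi c1, of "n-1"] unfolding ZZi one_pow_mat by simp
  have ZikZk: "Zi ^\<^sub>m (n-1) * Z ^\<^sub>m (n-1) = 1\<^sub>m n"
    using pow_mat_mult_distrib[OF Zi Z c1[symmetric], of "n-1"] unfolding ZiZ one_pow_mat by simp
  have Zk: "Z ^\<^sub>m (n-1) \<in> carrier_mat n n" "Zi ^\<^sub>m (n-1) \<in> carrier_mat n n" using Z Zi by auto
  have TK: "T = (X + 1\<^sub>m n) ^\<^sub>m (n-1) * Zi ^\<^sub>m (n-1)"
  proof -
    have "(X + 1\<^sub>m n) ^\<^sub>m (n-1) * Zi ^\<^sub>m (n-1) = T * (Z ^\<^sub>m (n-1) * Zi ^\<^sub>m (n-1))"
      unfolding K using assoc_mult_mat[OF Tc Zk] .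
    then show ?thesis using ZkZik Tc by simp
  qed
  have jb0: "jordan_block n (0::'a) = jordan_block n (-1) + 1\<^sub>m n"
    by (rule eq_matI) (auto simp: jordan_block_def)
  have X1: "X + 1\<^sub>m n = P * jordan_block n 0 * Q"
  proof -
    have "P * jordan_block n 0 * Q = (P * jordan_block n (-1) + P * 1\<^sub>m n) * Q"
      unfolding jb0 using mult_add_distrib_mat[OF P jordan_block_carrier one_carrier_mat] by simp
    also have "\<dots> = P * jordan_block n (-1) * Q + P * 1\<^sub>m n * Q"
      using add_mult_distrib_mat[of "P * jordan_block n (-1)" n n "P * 1\<^sub>m n" Q n] P Q by simp
    also have "\<dots> = X + 1\<^sub>m n"
    proof -
      have a: "P * 1\<^sub>m n * Q = 1\<^sub>m n" using P PQ(1) by simp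
      show ?thesis unfolding a PQ(3)[symmetric] by (rule refl)
    qed
    finally show ?thesis by simp
  qed
  have wit0: "similar_mat_wit (X + 1\<^sub>m n) (jordan_block n 0) P Q"
  proof -
    have "X + 1\<^sub>m n \<in> carrier_mat n n" using X by simp
    then show ?thesis unfolding similar_mat_wit_def Let_def using X1 PQ(1,2) P Q by auto
  qed
  let ?E = "mat n n (\<lambda>(i,j). if j \<ge> i \<and> j - i = n - 1 then 1 else 0) :: 'a mat"
  have Ec: "?E \<in> carrier_mat n n" by simp
  have jz: "jordan_block n (0::'a) ^\<^sub>m (n-1) = ?E" by (rule jordan_block_zero_pow)
  have E: "(X + 1\<^sub>m n) ^\<^sub>m (n-1) = P * ?E * Q"
    unfolding jz[symmetric] by (rule similar_mat_wit_pow_id[OF wit0])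
  have PE: "P * ?E \<in> carrier_mat n n" using P Ec by simp
  have QW: "Q * Zi ^\<^sub>m (n-1) \<in> carrier_mat n n" using Q Zk by simp
  have G: "J * T = (J * P) * ?E * (Q * Zi ^\<^sub>m (n-1))"
  proof -
    have "J * T = J * (P * ?E * Q * Zi ^\<^sub>m (n-1))" unfolding TK E ..
    also have "P * ?E * Q * Zi ^\<^sub>m (n-1) = (P * ?E) * (Q * Zi ^\<^sub>m (n-1))"
      by (rule assoc_mult_mat[OF PE Q Zk(2)])
    also have "J * ((P * ?E) * (Q * Zi ^\<^sub>m (n-1))) = (J * (P * ?E)) * (Q * Zi ^\<^sub>m (n-1))"
      by (rule assoc_mult_mat[OF J PE QW, symmetric])
    also have "J * (P * ?E) = (J * P) * ?E"
      by (rule assoc_mult_mat[OF J P Ec, symmetric])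
    finally show ?thesis .
  qed
  have inv1: "(Q * Ji) * (J * P) = 1\<^sub>m n"
  proof -
    have "(Q * Ji) * (J * P) = Q * ((Ji * J) * P)"
      using J Ji P Q by (simp add: assoc_mult_mat[of _ n n _ n _ n])
    then show ?thesis using JiJ PQ P by simp
  qed
  have inv2: "(Q * Zi ^\<^sub>m (n-1)) * (Z ^\<^sub>m (n-1) * P) = 1\<^sub>m n"
  proof -
    have "(Q * Zi ^\<^sub>m (n-1)) * (Z ^\<^sub>m (n-1) * P) = Q * ((Zi ^\<^sub>m (n-1) * Z ^\<^sub>m (n-1)) * P)"
      using Zk P Q by (simp add: assoc_mult_mat[of _ n n _ n _ n])
    then show ?thesis using ZikZk PQ P by simp
  qed
  have c2: "J * P \<in> carrier_mat n n" "Q * Zi ^\<^sub>m (n-1) \<in> carrier_mat n n"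
    "Q * Ji \<in> carrier_mat n n" "Z ^\<^sub>m (n-1) * P \<in> carrier_mat n n" using J Ji P Q Zk by auto
  have sk: "transpose_mat ((J * P) * ?E * (Q * Zi ^\<^sub>m (n-1))) = - ((J * P) * ?E * (Q * Zi ^\<^sub>m (n-1)))"
    using Gskew unfolding G .
  show False
    by (rule rank1_skew_false[OF two n c2 inv1 inv2 sk])
qed

theorem corollary7p3:
  fixes J X :: "'a :: {finite, field} mat" and M m :: nat
  assumes "M \<ge> 2" and "coprime M (card (UNIV :: 'a set))" and "m \<ge> 1"
    and "nondeg_alternating_form (2 * m) J"
    and "X \<in> symplectic_group (2 * m) J"
    and "similar_mat X (jordan_block (2 * m) (-1))"
  shows "is_Mth_power_in (symplectic_group (2 * m) J) M X \<longleftrightarrow> odd M"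
proof -
  define n where "n = 2 * m"
  have n1: "n \<ge> 1" using assms(3) by (simp add: n_def)
  have J: "J \<in> carrier_mat n n" and Jinv: "invertible_mat J"
    and alt: "\<forall>v\<in>carrier_vec n. v \<bullet> (J *\<^sub>v v) = 0"
    using assms(4) unfolding nondeg_alternating_form_def n_def by auto
  have XS: "X \<in> symplectic_group n J" using assms(5) by (simp add: n_def)
  have X: "X \<in> carrier_mat n n" using XS unfolding symplectic_group_def by auto
  obtain P Q where wit: "similar_mat_wit X (jordan_block n (-1)) P Q"
    using assms(6) unfolding similar_mat_def n_def by blast
  have cpos: "CHAR('a) > 0" by (rule finite_imp_CHAR_pos) simp
  have p: "prime CHAR('a)" by (rule prime_CHAR_semidom[OF cpos])
  have pcard: "CHAR('a) dvd card (UNIV :: 'a set)" by (rule CHAR_dvd_CARD)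
  have p2: "CHAR('a) \<ge> 2" using p by (simp add: prime_ge_2_nat)
  have ns: "n \<le> CHAR('a) ^ n"
  proof -
    have "n < 2 ^ n" by (rule less_exp)
    also have "(2::nat) ^ n \<le> CHAR('a) ^ n" using p2 by (rule power_mono) simp
    finally show ?thesis by simp
  qed
  define r where "r = CHAR('a) ^ n * 2"
  have ord: "X ^\<^sub>m r = 1\<^sub>m n" unfolding r_def by (rule order_X[OF p ns X wit])
  have "CHAR('a) ^ n > 0" using cpos by simp
  then have r1: "r > 1" unfolding r_def by linarith
  have Jc: "J \<in> carrier_mat n n" by (rule J)
  show ?thesis unfolding n_def[symmetric]
  proof
    assume pow: "is_Mth_power_in (symplectic_group n J) M X"
    show "odd M"
    proof (rule ccontr)
      assume ev: "\<not> odd M"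
      have two: "(2::'a) \<noteq> 0"
      proof
        assume "(2::'a) = 0"
        then have "(of_nat 2 :: 'a) = 0" by simp
        then have "CHAR('a) dvd 2" by (simp only: of_nat_eq_0_iff_char_dvd)
        then have "CHAR('a) = 2" using p2 by (simp add: dvd_imp_le le_antisym)
        then have "2 dvd card (UNIV :: 'a set)" using pcard by simp
        moreover have "2 dvd M" using ev by simp
        ultimately have "(2::nat) = 1" by (rule coprime_common_divisor_nat[OF assms(2), rotated])
        then show False by simp
      qed
      obtain Y where Y: "Y \<in> symplectic_group n J" "Y ^\<^sub>m M = X"
        using pow unfolding is_Mth_power_in_def by blast
      have Yc: "Y \<in> carrier_mat n n" using Y unfolding symplectic_group_def by auto
      define Z where "Z = Y ^\<^sub>m (M div 2)"
      have ZS: "Z \<in> symplectic_group n J" unfolding Z_def by (rule sympl_pow[OF Y(1) Jc])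
      have Z: "Z \<in> carrier_mat n n" "transpose_mat Z * J * Z = J"
        using ZS unfolding symplectic_group_def by auto
      have ZX: "Z * Z = X"
      proof -
        have "M = M div 2 * 2" using ev by simp
        then have "Y ^\<^sub>m M = Y ^\<^sub>m (M div 2 * 2)" by (rule arg_cong)
        also have "\<dots> = Z ^\<^sub>m 2" unfolding Z_def by (rule pow_mat_mult[OF Yc])
        also have "\<dots> = Z * Z" by (rule pow_mat_two[OF Z(1)])
        finally show ?thesis using Y(2) by simp
      qed
      define Zi where "Zi = Z ^\<^sub>m (2 * r - 1)"
      have Zic: "Zi \<in> carrier_mat n n" using Z by (simp add: Zi_def)
      have Z2r: "Z ^\<^sub>m (2 * r) = 1\<^sub>m n"
      proof -
        have "Z ^\<^sub>m (2 * r) = (Z ^\<^sub>m 2) ^\<^sub>m r" by (rule pow_mat_mult[OF Z(1)])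
        also have "\<dots> = X ^\<^sub>m r" by (simp only: pow_mat_two[OF Z(1)] ZX)
        also have "\<dots> = 1\<^sub>m n" by (rule ord)
        finally show ?thesis .
      qed
      have Z1: "Z ^\<^sub>m 1 = Z" using Z(1) by simp
      have e1: "1 + (2 * r - 1) = 2 * r" using r1 by simp
      have e2: "(2 * r - 1) + 1 = 2 * r" using r1 by simp
      have ZZi: "Z * Zi = 1\<^sub>m n"
      proof -
        have "Z * Zi = Z ^\<^sub>m 1 * Zi" by (simp only: Z1)
        also have "\<dots> = Z ^\<^sub>m (1 + (2 * r - 1))" unfolding Zi_def by (rule pow_mat_add[OF Z(1), symmetric])
        also have "\<dots> = 1\<^sub>m n" unfolding e1 by (rule Z2r)
        finally show ?thesis .
      qed
      have ZiZ: "Zi * Z = 1\<^sub>m n"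
      proof -
        have "Zi * Z = Zi * Z ^\<^sub>m 1" by (simp only: Z1)
        also have "\<dots> = Z ^\<^sub>m ((2 * r - 1) + 1)" unfolding Zi_def by (rule pow_mat_add[OF Z(1), symmetric])
        also have "\<dots> = 1\<^sub>m n" unfolding e2 by (rule Z2r)
        finally show ?thesis .
      qed
      obtain B where B: "inverts_mat J B" "inverts_mat B J"
        using Jinv unfolding invertible_mat_def by blast
      have JB: "J * B = 1\<^sub>m n" using B(1) J unfolding inverts_mat_def by simp
      have BJ: "B * J = 1\<^sub>m (dim_row B)" using B(2) unfolding inverts_mat_def by simp
      have "dim_col B = n" using arg_cong[OF JB, of dim_col] by simp
      moreover have "dim_row B = n" using arg_cong[OF BJ, of dim_col] J by simp
      ultimately have Bc: "B \<in> carrier_mat n n" by (intro carrier_matI) simp_all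
      have BJ': "B * J = 1\<^sub>m n" using BJ Bc by simp
      have Jskew: "transpose_mat J = - J" by (rule alt_skew[OF J alt])
      show False
        by (rule no_sqrt[OF two n1 J Bc BJ' Jskew Z ZX Zic ZZi ZiZ wit])
    qed
  next
    assume odd: "odd M"
    have "coprime M (CHAR('a))" by (rule coprime_divisors[OF dvd_refl pcard assms(2)])
    then have "coprime M r" unfolding r_def using odd by simp
    then show "is_Mth_power_in (symplectic_group n J) M X"
      by (rule power_of_finite_order[OF XS Jc ord r1])
  qed
qed

end
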